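(* Let $m\ge1$, let $\Theta$ be a non-degenerate quadratic form of type $\pm1$ on $V=\mathbb{F}_4^{2m}$ with polar symplectic form $\langle\cdot,\cdot\rangle$, and let $\Theta^*=\mathrm{Tr}_{\mathbb{F}_4/\mathbb{F}_2}\circ\Theta$ and $\langle u,v\rangle^*=\mathrm{Tr}_{\mathbb{F}_4/\mathbb{F}_2}(\langle u,v\rangle)$, regarding $V$ as $\mathbb{F}_2^{4m}$. Let $X=\{a\in V:\Theta^*(a)=1\}$. Let $G_1$ be the graph on $X$ with $a\sim b$ iff $a\neq b$ and $\langle a,b\rangle^*=0$ (a copy of $NO^{\pm}(4m,2)$), and $G_2$ the graph on $X$ with $a\sim b$ iff $a\ne b$ and $\Theta(a+b)=\langle a,b\rangle^2$ (a copy of $NO^{\mp}(2m+1,4)$). Let $\lambda\in\mathbb{F}_4\setminus\mathbb{F}_2$ be a root of $x^2+x+1$ and $A=\{a\in\mathbb{F}_4^{2m}:\Theta(a)=\lambda\}$, $B=\{a\in\mathbb{F}_4^{2m}:\Theta(a)=\lambda+1\}$. Then $X=A\cup B$ and the Seidel switching between $G_1$ and $G_2$ is the switching with respect to the sets $A$, $B$; that is, $G_2$ is obtained from $G_1$ by Seidel switching with respect to $A$ (equivalently $B$). Moreover $|A|=|B|=2^{4m-2}\mp2^{2m-2}$, and the subgraphs induced on $A$ and on $B$ are regular of degree $2^{4m-3}\mp2^{2m-2}-1$.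
   Context: For a quadratic form $\Theta$ on $\mathbb{F}_q^{n}$ ($q$ even) the polar form is $f(u,v)=\Theta(u+v)+\Theta(u)+\Theta(v)$. A form on $\mathbb{F}_q^{2m}$ is non-degenerate if $f$ is non-degenerate, of type $+1$ (hyperbolic) if its Witt index is $m$, of type $-1$ (elliptic) if it is $m-1$. Seidel switching of a graph with respect to a vertex subset $Y$ replaces all edges between $Y$ and its complement by non-edges and all such non-edges by edges, leaving the rest unchanged. Signs are read consistently (upper with upper). *)

theory Defs
  imports "HOL-Analysis.Analysis"
begin

text \<open>Polar form of a quadratic form (characteristic 2 convention of the paper).\<close>
definition polar :: "('a::field^'n \<Rightarrow> 'a) \<Rightarrow> 'a^'n \<Rightarrow> 'a^'n \<Rightarrow> 'a" where
  "polar Q u v = Q (u + v) + Q u + Q v"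

definition quadratic_form :: "('a::field^'n \<Rightarrow> 'a) \<Rightarrow> bool" where
  "quadratic_form Q \<longleftrightarrow>
     (\<forall>c x. Q (c *s x) = c^2 * Q x) \<and>
     (\<forall>u v w. polar Q (u + v) w = polar Q u w + polar Q v w) \<and>
     (\<forall>c u v. polar Q (c *s u) v = c * polar Q u v) \<and>
     (\<forall>u v w. polar Q u (v + w) = polar Q u v + polar Q u w) \<and>
     (\<forall>c u v. polar Q u (c *s v) = c * polar Q u v)"

definition nondegenerate :: "('a::field^'n \<Rightarrow> 'a) \<Rightarrow> bool" where
  "nondegenerate Q \<longleftrightarrow> (\<forall>u. (\<forall>v. polar Q u v = 0) \<longrightarrow> u = 0)"

definition witt_index :: "('a::field^'n \<Rightarrow> 'a) \<Rightarrow> nat" where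
  "witt_index Q = Max {vec.dim W | W. vec.subspace W \<and> (\<forall>x\<in>W. Q x = 0)}"

text \<open>Absolute trace from a field with 4 elements to its prime field F_2 = {0,1}.\<close>
definition tr4 :: "'a::field \<Rightarrow> 'a" where
  "tr4 x = x + x^2"

definition seidel_switch :: "('v \<Rightarrow> 'v \<Rightarrow> bool) \<Rightarrow> 'v set \<Rightarrow> 'v \<Rightarrow> 'v \<Rightarrow> bool" where
  "seidel_switch E Y a b = (if (a \<in> Y) \<noteq> (b \<in> Y) then a \<noteq> b \<and> \<not> E a b else E a b)"

end

theory Submission
  imports Defs
begin


lemma field_fermat:
  fixes x :: "'a :: {field,finite}"
  shows "x ^ card (UNIV :: 'a set) = x"
proof (cases "x = 0")
  case False
  have "x * (\<Prod>y\<in>UNIV-{0}. x * y) = x * x ^ (card (UNIV :: 'a set) - 1) * \<Prod>(UNIV-{0})"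
    by (simp add: prod.distrib mult_ac)
  also have "x * x ^ (card (UNIV :: 'a set) - 1) = x ^ Suc (card (UNIV :: 'a set) - 1)"
    by (subst power_Suc) auto
  also have "Suc (card (UNIV :: 'a set) - 1) = card (UNIV :: 'a set)"
    using finite_UNIV_card_ge_0[where ?'a = 'a] by simp
  also have "(\<Prod>y\<in>UNIV-{0}. x * y) = (\<Prod>y\<in>UNIV-{0}. y)"
    by (rule prod.reindex_bij_witness[of _ "\<lambda>y. y / x" "\<lambda>y. x * y"]) (use False in auto)
  finally show ?thesis
    by simp
qed (use finite_UNIV_card_ge_0[where ?'a = 'a] in auto)

lemma char2:
  assumes "CARD('a::{field,finite}) = 4"
  shows "(1::'a) + 1 = 0"
proof -
  have "(-1::'a) ^ 4 = -1" using field_fermat[of "-1::'a"] assms by simp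
  then have "(1::'a) = -1" by simp
  then show ?thesis by (metis add.right_inverse)
qed

locale F4Q =
  fixes \<Theta> :: "'a::{field,finite}^'n \<Rightarrow> 'a"
  assumes F4: "CARD('a) = 4" and qf: "quadratic_form \<Theta>" and nd: "nondegenerate \<Theta>"
begin

abbreviation "f \<equiv> polar \<Theta>"

lemma two0: "(1::'a) + 1 = 0" using char2[OF F4] .
lemma add_self[simp]: "(x::'a) + x = 0"
  by (metis distrib_left mult.right_neutral mult_zero_right two0)
lemma minus_eq[simp]: "-(x::'a) = x"
  by (metis add_self add.inverse_unique)
lemma diff_eq[simp]: "(x::'a) - y = x + y"
  by (metis minus_eq diff_conv_add_uminus)
lemma two_eq0[simp]: "(2::'a) = 0" by (metis one_add_one two0)
lemma vadd_self[simp]: "(v::'a^'n) + v = 0"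
  unfolding vec_eq_iff by simp
lemma vminus_eq[simp]: "-(v::'a^'n) = v"
  unfolding vec_eq_iff by simp
lemma vdiff_eq[simp]: "(x::'a^'n) - y = x + y"
  unfolding vec_eq_iff by simp

lemma scale: "\<Theta> (c *s x) = c^2 * \<Theta> x" using qf unfolding quadratic_form_def by blast
lemma Theta0[simp]: "\<Theta> 0 = 0" using scale[of 0 0] by simp
lemma Theta_add: "\<Theta> (u + v) = \<Theta> u + \<Theta> v + f u v"
  unfolding polar_def by (simp add: add.assoc[symmetric])
lemma f_sym: "f u v = f v u" unfolding polar_def by (simp add: add.commute add.left_commute)
lemma f_self[simp]: "f u u = 0" unfolding polar_def by simp
lemma f_add1: "f (u + v) w = f u w + f v w" using qf unfolding quadratic_form_def by blast
lemma f_add2: "f u (v + w) = f u v + f u w" using qf unfolding quadratic_form_def by blast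
lemma f_scale1: "f (c *s u) v = c * f u v" using qf unfolding quadratic_form_def by blast
lemma f_scale2: "f u (c *s v) = c * f u v" using qf unfolding quadratic_form_def by blast
lemma f_zero1[simp]: "f 0 v = 0" using f_scale1[of 0 v v] by simp
lemma f_zero2[simp]: "f v 0 = 0" using f_scale2[of v 0 v] by simp

lemma sq_inj: "(x::'a)^2 = y^2 \<Longrightarrow> x = y"
proof -
  assume "x^2 = y^2"
  have "(x + y)^2 = x^2 + y^2"
    by (simp add: power2_eq_square algebra_simps)
  then have "(x+y)^2 = 0" using \<open>x^2 = y^2\<close> by simp
  then have "x + y = 0" by simp
  then show "x = y" by (metis add_self add_left_cancel)
qed

lemma sq_surj: "\<exists>s::'a. s^2 = c"
proof -
  have "inj (\<lambda>x::'a. x^2)" by (meson injI sq_inj)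
  then have "surj (\<lambda>x::'a. x^2)" using finite_UNIV_inj_surj[OF finite] by blast
  then show ?thesis by (metis surjD)
qed

end


lemma card_span_indep:
  fixes B :: "('a::{field,finite}^'n) set"
  assumes "finite B" "vec.independent B"
  shows "card (vec.span B) = CARD('a) ^ card B"
  using assms
proof (induction B rule: finite_induct)
  case empty
  then show ?case by simp
next
  case (insert x B)
  have iB: "vec.independent B" and xB: "x \<notin> vec.span B"
    using insert.prems insert.hyps(2) by (auto simp: vec.independent_insert)
  have eq: "vec.span (insert x B) = (\<lambda>(c,y). c *s x + y) ` (UNIV \<times> vec.span B)"
  proof (rule set_eqI)
    fix z
    show "z \<in> vec.span (insert x B) \<longleftrightarrow> z \<in> (\<lambda>(c,y). c *s x + y) ` (UNIV \<times> vec.span B)"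
    proof
      assume "z \<in> vec.span (insert x B)"
      then obtain k where "z - k *s x \<in> vec.span B" by (auto simp: vec.span_insert)
      then show "z \<in> (\<lambda>(c,y). c *s x + y) ` (UNIV \<times> vec.span B)"
        by (intro image_eqI[of _ _ "(k, z - k *s x)"]) auto
    next
      assume "z \<in> (\<lambda>(c,y). c *s x + y) ` (UNIV \<times> vec.span B)"
      then obtain c y where "y \<in> vec.span B" "z = c *s x + y" by auto
      then show "z \<in> vec.span (insert x B)" by (auto simp: vec.span_insert intro!: exI[of _ c])
    qed
  qed
  have inj: "inj_on (\<lambda>(c,y). c *s x + y) (UNIV \<times> vec.span B)"
  proof (rule inj_onI, clarsimp)
    fix c y c' y'
    assume y: "y \<in> vec.span B" and y': "y' \<in> vec.span B" and e: "c *s x + y = c' *s x + y'"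
    show "c = c' \<and> y = y'"
    proof (cases "c = c'")
      case True then show ?thesis using e by simp
    next
      case False
      have "(c - c') *s x = y' - y" using e by (simp add: algebra_simps vector_sadd_rdistrib vector_ssub_ldistrib)
      then have "(c - c') *s x \<in> vec.span B" using y y' vec.span_diff by metis
      then have "(1 / (c - c')) *s ((c - c') *s x) \<in> vec.span B" by (rule vec.span_scale)
      moreover have "(1 / (c - c')) * (c - c') = 1" using False by simp
      then have "(1 / (c - c')) *s ((c - c') *s x) = x"
        by (simp only: vector_smult_assoc vector_smult_lid)
      ultimately have "x \<in> vec.span B" by simp
      then show ?thesis using xB by blast
    qed
  qed
  have "card (vec.span (insert x B)) = CARD('a) * card (vec.span B)"
    unfolding eq using inj by (simp add: card_image card_cartesian_product)
  then show ?case using insert.IH[OF iB] insert.hyps by simp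
qed

lemma card_subspace:
  fixes W :: "('a::{field,finite}^'n) set"
  assumes "vec.subspace W"
  shows "card W = CARD('a) ^ vec.dim W"
proof -
  obtain B where B: "B \<subseteq> W" "vec.independent B" "W \<subseteq> vec.span B" "card B = vec.dim W"
    using vec.basis_exists by blast
  have "vec.span B = W" using B assms vec.span_minimal by blast
  moreover have "finite B" using B(2) vec.finiteI_independent by blast
  ultimately show ?thesis using card_span_indep[OF _ B(2)] B(4) by simp
qed

lemma card_filter_sum: "finite S \<Longrightarrow> card {x\<in>S. P x} = (\<Sum>x\<in>S. if P x then 1 else 0)"
proof -
  assume "finite S"
  have "{x\<in>S. P x} = S \<inter> Collect P" by auto
  then show ?thesis using \<open>finite S\<close> by (simp add: sum.If_cases)
qed

lemma card_fibers:
  fixes g :: "'v \<Rightarrow> 'b::finite"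
  assumes "finite S"
  shows "card S = (\<Sum>c\<in>UNIV. card {x\<in>S. g x = c})"
proof -
  have "(\<Sum>c\<in>UNIV. card {x\<in>S. g x = c}) = (\<Sum>c\<in>UNIV. \<Sum>x\<in>S. if g x = c then 1 else 0)"
    using assms by (simp add: card_filter_sum)
  also have "\<dots> = (\<Sum>x\<in>S. \<Sum>c\<in>UNIV. if g x = c then 1 else 0)" by (rule sum.swap)
  also have "\<dots> = (\<Sum>x\<in>S. 1)" by simp
  finally show ?thesis by simp
qed



context F4Q begin

lemma addc1[simp]: "(x::'a) + (y + x) = y" by (metis add.commute add.left_commute add_self add_0_right)
lemma addc2[simp]: "(x::'a) + (x + y) = y" by (metis add.assoc add_self add_0_left)
lemma vaddc2[simp]: "(x::'a^'n) + y + y = x" by (metis add.assoc vadd_self add_0_right)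

lemma card_filter_UNIV: "card {x::'a^'n. P x} = (\<Sum>x\<in>UNIV. if P x then 1 else 0)"
  using card_filter_sum[of "UNIV::('a^'n) set" P] by simp

lemma cardF: "CARD('a) = 4" using F4 .

lemma fiber_shift:
  fixes S :: "('a^'n) set" and \<phi> :: "'a^'n \<Rightarrow> 'a"
  assumes S: "finite S" and cl: "\<And>x c. x \<in> S \<Longrightarrow> x + c *s u \<in> S"
    and ph: "\<And>x c. x \<in> S \<Longrightarrow> \<phi> (x + c *s u) = \<phi> x + c"
  shows "card S = 4 * card {x\<in>S. \<phi> x = d}"
proof -
  have eq: "card {x\<in>S. \<phi> x = e} = card {x\<in>S. \<phi> x = d}" for e
  proof -
    define k where "k = d + e"
    have "bij_betw (\<lambda>x. x + k *s u) {x\<in>S. \<phi> x = e} {x\<in>S. \<phi> x = d}"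
    proof (rule bij_betw_byWitness[where f'="\<lambda>x. x + k *s u"])
      have g3: "\<phi> (x + k *s u) = d" if "x \<in> S" "\<phi> x = e" for x
      proof -
        have "\<phi> (x + k *s u) = \<phi> x + k" using ph that(1) .
        also have "\<dots> = d" using that(2) by (simp add: k_def)
        finally show ?thesis .
      qed
      have g4: "\<phi> (x + k *s u) = e" if "x \<in> S" "\<phi> x = d" for x
      proof -
        have "\<phi> (x + k *s u) = \<phi> x + k" using ph that(1) .
        also have "\<dots> = e" using that(2) by (simp add: k_def)
        finally show ?thesis .
      qed
      show "\<forall>a\<in>{x \<in> S. \<phi> x = e}. a + k *s u + k *s u = a" by (simp only: vaddc2) simp
      show "\<forall>a\<in>{x \<in> S. \<phi> x = d}. a + k *s u + k *s u = a" by (simp only: vaddc2) simp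
      show "(\<lambda>x. x + k *s u) ` {x \<in> S. \<phi> x = e} \<subseteq> {x \<in> S. \<phi> x = d}" using cl g3 by auto
      show "(\<lambda>x. x + k *s u) ` {x \<in> S. \<phi> x = d} \<subseteq> {x \<in> S. \<phi> x = e}" using cl g4 by auto
    qed
    then show ?thesis by (rule bij_betw_same_card)
  qed
  have "card S = (\<Sum>e\<in>UNIV. card {x\<in>S. \<phi> x = e})" by (rule card_fibers[OF S])
  also have "\<dots> = (\<Sum>e\<in>(UNIV::'a set). card {x\<in>S. \<phi> x = d})" by (rule sum.cong[OF refl eq])
  finally show ?thesis using cardF by simp
qed

definition perp :: "('a^'n) set \<Rightarrow> ('a^'n) set" where
  "perp W = {x. \<forall>y\<in>W. f x y = 0}"

lemma perp_subspace: "vec.subspace (perp W)"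
  unfolding vec.subspace_def perp_def by (auto simp: f_add1 f_scale1)

lemma W_sub_perp:
  assumes "vec.subspace W" "\<forall>x\<in>W. \<Theta> x = 0"
  shows "W \<subseteq> perp W"
  unfolding perp_def
proof (clarify)
  fix x y assume "x \<in> W" "y \<in> W"
  then have "x + y \<in> W" using assms(1) vec.subspace_add by blast
  then show "f x y = 0" using assms \<open>x \<in> W\<close> \<open>y \<in> W\<close> unfolding polar_def by simp
qed

lemma exists_unit:
  assumes "y \<noteq> 0" shows "\<exists>x. f x y = 1"
proof -
  obtain v where v: "f y v \<noteq> 0" using nd assms unfolding nondegenerate_def by blast
  have "f ((1 / f y v) *s v) y = 1" using v by (simp add: f_scale1 f_sym[of v y])
  then show ?thesis by blast
qed

lemma sum_if_const: "finite S \<Longrightarrow> (\<Sum>x\<in>S. if P x then (k::nat) else 0) = k * card {x\<in>S. P x}"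
  by (simp add: card_filter_sum sum_distrib_left if_distrib cong: if_cong)

lemma card_perp:
  assumes W: "vec.subspace W"
  shows "card W * card (perp W) = CARD('a^'n)"
proof -
  let ?N = "CARD('a^'n)"
  let ?P = "perp W"
  have finW: "finite W" by simp
  have "(\<Sum>y\<in>W. card {x. f x y = 0}) = (\<Sum>y\<in>W. \<Sum>x\<in>UNIV. if f x y = 0 then 1 else 0)"
    using card_filter_UNIV by simp
  also have "\<dots> = (\<Sum>x\<in>UNIV. \<Sum>y\<in>W. if f x y = 0 then 1 else 0)" by (rule sum.swap)
  also have "\<dots> = (\<Sum>x\<in>UNIV. card {y\<in>W. f x y = 0})"
    using card_filter_sum[OF finW] by simp
  finally have dc: "(\<Sum>y\<in>W. card {x. f x y = 0}) = (\<Sum>x\<in>UNIV. card {y\<in>W. f x y = 0})" .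
  have L: "4 * card {x. f x y = 0} = ?N + (if y = 0 then 3 * ?N else 0)" for y
  proof (cases "y = 0")
    case True then show ?thesis by simp
  next
    case False
    then obtain u where u: "f u y = 1" using exists_unit by blast
    have "card (UNIV::('a^'n) set) = 4 * card {x\<in>UNIV. f x y = 0}"
      by (rule fiber_shift[where u=u]) (auto simp: f_add1 f_scale1 u)
    then show ?thesis using False by simp
  qed
  have R: "4 * card {y\<in>W. f x y = 0} = card W + (if x \<in> ?P then 3 * card W else 0)" for x
  proof (cases "x \<in> ?P")
    case True
    then have "{y\<in>W. f x y = 0} = W" unfolding perp_def by auto
    then show ?thesis using True by simp
  next
    case False
    then obtain y0 where y0: "y0 \<in> W" "f x y0 \<noteq> 0" unfolding perp_def by auto
    define u where "u = (1 / f x y0) *s y0"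
    have u: "u \<in> W" "f x u = 1" using y0 W unfolding u_def by (auto simp: f_scale2 vec.subspace_scale)
    have "card W = 4 * card {y\<in>W. f x y = 0}"
      by (rule fiber_shift[where u=u]) (auto simp: f_add2 f_scale2 u W vec.subspace_add vec.subspace_scale)
    then show ?thesis using False by simp
  qed
  have "4 * (\<Sum>y\<in>W. card {x. f x y = 0}) = (\<Sum>y\<in>W. ?N + (if y = 0 then 3 * ?N else 0))"
    by (simp add: sum_distrib_left L)
  also have "\<dots> = card W * ?N + 3 * ?N"
    using W vec.subspace_0 by (simp add: sum.distrib sum_if_const)
  finally have e1: "4 * (\<Sum>y\<in>W. card {x. f x y = 0}) = card W * ?N + 3 * ?N" .
  have "4 * (\<Sum>x\<in>UNIV. card {y\<in>W. f x y = 0}) = (\<Sum>x\<in>UNIV. card W + (if x \<in> ?P then 3 * card W else 0))"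
    by (simp add: sum_distrib_left R)
  also have "\<dots> = ?N * card W + 3 * card W * card ?P"
    by (simp add: sum.distrib sum_if_const)
  finally have e2: "4 * (\<Sum>x\<in>UNIV. card {y\<in>W. f x y = 0}) = ?N * card W + 3 * card W * card ?P" .
  from e1 e2 dc show ?thesis by (simp add: mult.commute)
qed

end


context F4Q begin

lemma witt_W:
  obtains W where "vec.subspace W" "\<forall>x\<in>W. \<Theta> x = 0" "vec.dim W = witt_index \<Theta>"
    "\<And>W'. vec.subspace W' \<Longrightarrow> \<forall>x\<in>W'. \<Theta> x = 0 \<Longrightarrow> vec.dim W' \<le> witt_index \<Theta>"
proof -
  let ?D = "{vec.dim W | W. vec.subspace W \<and> (\<forall>x\<in>W. \<Theta> x = 0)}"
  have "?D \<subseteq> {..CARD('n)}"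
  proof
    fix d assume "d \<in> ?D"
    then obtain W0 :: "('a^'n) set" where "d = vec.dim W0" by auto
    moreover have "vec.dim W0 \<le> vec.dim (UNIV::('a^'n) set)" by (rule vec.dim_subset) simp
    moreover have "vec.dim (UNIV::('a^'n) set) = CARD('n)" by (rule vec_dim_card)
    ultimately have "d \<le> CARD('n)" by linarith
    then show "d \<in> {..CARD('n)}" by simp
  qed
  then have fin: "finite ?D" by (rule finite_subset) simp
  have ne: "vec.dim {0::'a^'n} \<in> ?D" by auto
  then have "Max ?D \<in> ?D" using fin by (intro Max_in) auto
  then obtain W where W: "vec.subspace W" "\<forall>x\<in>W. \<Theta> x = 0" "vec.dim W = witt_index \<Theta>"
    unfolding witt_index_def by auto
  moreover have "vec.dim W' \<le> witt_index \<Theta>" if "vec.subspace W'" "\<forall>x\<in>W'. \<Theta> x = 0" for W'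
    unfolding witt_index_def using that fin by (intro Max_ge) auto
  ultimately show ?thesis using that by blast
qed

lemma maximal_ext:
  assumes W: "vec.subspace W" "\<forall>x\<in>W. \<Theta> x = 0"
    and mx: "\<And>W'. vec.subspace W' \<Longrightarrow> \<forall>x\<in>W'. \<Theta> x = 0 \<Longrightarrow> vec.dim W' \<le> vec.dim W"
    and x: "x \<in> perp W" "\<Theta> x = 0"
  shows "x \<in> W"
proof (rule ccontr)
  assume nx: "x \<notin> W"
  let ?W' = "vec.span (insert x W)"
  have sW: "vec.span W = W" using W(1) by simp
  have "\<forall>z\<in>?W'. \<Theta> z = 0"
  proof
    fix z assume "z \<in> ?W'"
    then obtain k where k: "z - k *s x \<in> W" using sW by (auto simp: vec.span_insert)
    define y where "y = z - k *s x"
    have z: "z = k *s x + y" unfolding y_def by (metis add.commute diff_add_cancel)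
    have yW: "y \<in> W" using k unfolding y_def .
    have "f (k *s x) y = 0" using x(1) yW unfolding perp_def by (simp add: f_scale1)
    then have "\<Theta> (k *s x + y) = 0" using x(2) W(2) yW by (simp add: Theta_add scale)
    then show "\<Theta> z = 0" using z by simp
  qed
  moreover have nxs: "x \<notin> vec.span W" using nx sW by metis
  moreover have "vec.dim ?W' = vec.dim W + 1"
    using nxs by (simp add: vec.dim_insert)
  ultimately show False using mx[of ?W'] by simp
qed

lemma N_out:
  assumes W: "vec.subspace W" "\<forall>x\<in>W. \<Theta> x = 0"
  shows "4 * card {x. x \<notin> perp W \<and> \<Theta> x = c} = CARD('a^'n) - card (perp W)"
proof -
  let ?P = "perp W"
  have WP: "W \<subseteq> ?P" using W_sub_perp[OF W] .
  have PS: "vec.subspace ?P" by (rule perp_subspace)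
  have "(\<Sum>y\<in>W. card {x\<in>-?P. \<Theta> (x + y) = c}) = (\<Sum>y\<in>W. \<Sum>x\<in>-?P. if \<Theta> (x + y) = c then 1 else 0)"
    by (intro sum.cong refl card_filter_sum) simp
  also have "\<dots> = (\<Sum>x\<in>-?P. \<Sum>y\<in>W. if \<Theta> (x + y) = c then 1 else 0)" by (rule sum.swap)
  also have "\<dots> = (\<Sum>x\<in>-?P. card {y\<in>W. \<Theta> (x + y) = c})"
    by (intro sum.cong refl card_filter_sum[symmetric]) simp
  finally have dc: "(\<Sum>y\<in>W. card {x\<in>-?P. \<Theta> (x + y) = c}) = (\<Sum>x\<in>-?P. card {y\<in>W. \<Theta> (x + y) = c})" .
  have L: "card {x\<in>-?P. \<Theta> (x + y) = c} = card {x\<in>-?P. \<Theta> x = c}" if y: "y \<in> W" for y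
  proof -
    have yP: "y \<in> ?P" using y WP by blast
    have cl: "x + y \<in> perp W \<longleftrightarrow> x \<in> perp W" for x
    proof
      assume "x \<in> perp W" then show "x + y \<in> perp W" using vec.subspace_add[OF PS _ yP, of x] by blast
    next
      assume "x + y \<in> perp W"
      then have "x + y + y \<in> perp W" using vec.subspace_add[OF PS _ yP] by blast
      then show "x \<in> perp W" by simp
    qed
    have "bij_betw (\<lambda>x. x + y) {x\<in>-?P. \<Theta> (x + y) = c} {x\<in>-?P. \<Theta> x = c}"
      by (rule bij_betw_byWitness[where f'="\<lambda>x. x + y"]) (auto simp: cl)
    then show ?thesis by (rule bij_betw_same_card)
  qed
  have R: "4 * card {y\<in>W. \<Theta> (x + y) = c} = card W" if x: "x \<notin> ?P" for x
  proof -
    obtain y0 where y0: "y0 \<in> W" "f x y0 \<noteq> 0" using x unfolding perp_def by auto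
    define u where "u = (1 / f x y0) *s y0"
    have u: "u \<in> W" "f x u = 1" using y0 W unfolding u_def by (auto simp: f_scale2 vec.subspace_scale)
    have eq: "{y\<in>W. \<Theta> (x + y) = c} = {y\<in>W. \<Theta> x + f x y = c}"
      using W(2) by (auto simp: Theta_add)
    have "card W = 4 * card {y\<in>W. \<Theta> x + f x y = c}"
      by (rule fiber_shift[where u=u]) (auto simp: f_add2 f_scale2 u W vec.subspace_add vec.subspace_scale add.assoc)
    then show ?thesis using eq by simp
  qed
  have LL: "(\<Sum>y\<in>W. card {x\<in>-?P. \<Theta> (x + y) = c}) = (\<Sum>y\<in>W. card {x\<in>-?P. \<Theta> x = c})"
    by (rule sum.cong[OF refl L])
  have "card W * (4 * card {x\<in>-?P. \<Theta> x = c}) = 4 * (\<Sum>y\<in>W. card {x\<in>-?P. \<Theta> (x + y) = c})"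
    unfolding LL by simp
  also have "\<dots> = 4 * (\<Sum>x\<in>-?P. card {y\<in>W. \<Theta> (x + y) = c})" unfolding dc ..
  also have "\<dots> = (\<Sum>x\<in>-?P. 4 * card {y\<in>W. \<Theta> (x + y) = c})" by (rule sum_distrib_left)
  also have "\<dots> = (\<Sum>x\<in>-?P. card W)" by (simp add: R)
  also have "\<dots> = card W * card (-?P)" by simp
  finally have "card W * (4 * card {x\<in>-?P. \<Theta> x = c}) = card W * card (-?P)" .
  moreover have "card W > 0" using W(1) vec.subspace_0 by (auto simp: card_gt_0_iff)
  ultimately have "4 * card {x\<in>-?P. \<Theta> x = c} = card (-?P)" by (metis mult_left_cancel not_gr0)
  moreover have "card (-?P) = CARD('a^'n) - card ?P" by (simp add: Compl_eq_Diff_UNIV card_Diff_subset)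
  moreover have "{x\<in>-?P. \<Theta> x = c} = {x. x \<notin> ?P \<and> \<Theta> x = c}" by auto
  ultimately show ?thesis by simp
qed

lemma scale_eq:
  assumes cl: "\<And>x s. x \<in> S \<Longrightarrow> s *s x \<in> S" and c: "c \<noteq> 0" "c' \<noteq> 0"
  shows "card {x\<in>S. \<Theta> x = c} = card {x\<in>S. \<Theta> x = c'}"
proof -
  obtain s where s: "s^2 = c' / c" using sq_surj by blast
  have s0: "s \<noteq> 0" using s c by auto
  have "bij_betw (\<lambda>x. s *s x) {x\<in>S. \<Theta> x = c} {x\<in>S. \<Theta> x = c'}"
  proof (rule bij_betw_byWitness[where f'="\<lambda>x. (1/s) *s x"])
    show "\<forall>a\<in>{x \<in> S. \<Theta> x = c}. (1/s) *s (s *s a) = a" using s0 by (simp add: vector_smult_assoc)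
    show "\<forall>a\<in>{x \<in> S. \<Theta> x = c'}. s *s ((1/s) *s a) = a" using s0 by (simp add: vector_smult_assoc)
    show "(*s) s ` {x \<in> S. \<Theta> x = c} \<subseteq> {x \<in> S. \<Theta> x = c'}" using cl s c by (auto simp: scale)
    have "\<Theta> ((1/s) *s x) = c" if "\<Theta> x = c'" for x
      using that s s0 c by (simp add: scale power_divide field_simps)
    then show "(\<lambda>x. (1/s) *s x) ` {x \<in> S. \<Theta> x = c'} \<subseteq> {x \<in> S. \<Theta> x = c}" using cl by auto
  qed
  then show ?thesis by (rule bij_betw_same_card)
qed

end


context F4Q begin

lemma univ4:
  fixes \<omega> :: 'a
  assumes w: "\<omega>^2 + \<omega> + 1 = 0"
  shows "UNIV = {0, 1, \<omega>, \<omega> + 1}" "\<omega> \<noteq> 0" "\<omega> \<noteq> 1" "\<omega> + 1 \<noteq> 0" "\<omega> + 1 \<noteq> 1" "\<omega> + 1 \<noteq> \<omega>"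
proof -
  show w0: "\<omega> \<noteq> 0"
  proof
    assume "\<omega> = 0" then have "(1::'a) = 0" using w by (simp add: power2_eq_square)
    then show False by simp
  qed
  show w1: "\<omega> \<noteq> 1" using w by auto
  show w2: "\<omega> + 1 \<noteq> 0" using w1 by (metis add_self add_left_cancel)
  show w3: "\<omega> + 1 \<noteq> 1" using w0 by simp
  show w4: "\<omega> + 1 \<noteq> \<omega>" by simp
  have "card {0, 1, \<omega>, \<omega> + 1} = 4" using w0 w1 w2 w3 w4 by auto
  then show "UNIV = {0, 1, \<omega>, \<omega> + 1}" using cardF
    by (metis card_subset_eq finite subset_UNIV)
qed

lemma sum4:
  fixes \<omega> :: 'a
  assumes w: "\<omega>^2 + \<omega> + 1 = 0"
  shows "(\<Sum>x\<in>UNIV. g x) = g 0 + g 1 + g \<omega> + g (\<omega> + 1)"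
proof -
  note u = univ4[OF w]
  have "0 \<noteq> \<omega>" "1 \<noteq> \<omega>" "0 \<noteq> \<omega> + 1" "1 \<noteq> \<omega> + 1" "\<omega> \<noteq> \<omega> + 1" using u(2-6) by metis+
  then show ?thesis unfolding u(1) using u(2-6) by (simp add: ac_simps)
qed

lemma count_c:
  fixes t :: nat and \<epsilon> :: int
  assumes dim: "CARD('n) = 2 * m" and m: "m \<ge> 1" and eps: "\<epsilon> = 1 \<or> \<epsilon> = -1"
    and wtype: "witt_index \<Theta> = (if \<epsilon> = 1 then m else m - 1)"
    and c: "c \<noteq> 0" and t: "t = 4^(m-1)"
  shows "int (card {x. \<Theta> x = c}) = 4 * int t^2 - \<epsilon> * int t"
proof -
  obtain W where W: "vec.subspace W" "\<forall>x\<in>W. \<Theta> x = 0" "vec.dim W = witt_index \<Theta>"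
    and mx: "\<And>W'. vec.subspace W' \<Longrightarrow> \<forall>x\<in>W'. \<Theta> x = 0 \<Longrightarrow> vec.dim W' \<le> witt_index \<Theta>"
    using witt_W by blast
  let ?P = "perp W"
  obtain k where k: "m = Suc k" using m by (cases m) auto
  have t': "t = 4^k" using t k by simp
  have hh: "(16::nat)^k = 4^k * 4^k" by (simp add: power_mult_distrib[symmetric])
  have N: "CARD('a^'n) = 16 * t^2" using dim cardF k t' hh
    by (simp add: power_mult power2_eq_square power_mult_distrib)
  have cW: "card W = 4 ^ witt_index \<Theta>" using card_subspace[OF W(1)] W(3) cardF by simp
  have WP: "card W * card ?P = 16 * t^2" using card_perp[OF W(1)] N by simp
  have WsP: "W \<subseteq> ?P" using W_sub_perp[OF W(1,2)] .
  have spl: "card {x. \<Theta> x = c} = card {x. x \<notin> ?P \<and> \<Theta> x = c} + card {x\<in>?P. \<Theta> x = c}"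
  proof -
    have "{x. \<Theta> x = c} = {x. x \<notin> ?P \<and> \<Theta> x = c} \<union> {x\<in>?P. \<Theta> x = c}" by auto
    then show ?thesis by (simp add: card_Un_disjoint disjoint_iff)
  qed
  have out: "4 * card {x. x \<notin> ?P \<and> \<Theta> x = c} = 16 * t^2 - card ?P"
    using N_out[OF W(1,2), of c] N by simp
  show ?thesis
  proof (cases "\<epsilon> = 1")
    case True
    then have "witt_index \<Theta> = m" using wtype by simp
    then have cW': "card W = 4 * t" using cW k t' by simp
    then have cP: "card ?P = 4 * t" using WP t' by (simp add: power2_eq_square)
    have "W = ?P" using WsP cW' cP by (intro card_subset_eq) auto
    then have "{x\<in>?P. \<Theta> x = c} = {}" using W(2) c by auto
    then have "4 * card {x. \<Theta> x = c} = 16 * t^2 - 4 * t" using spl out cP by simp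
    moreover have "4 * t \<le> 16 * t^2" by (simp add: power2_eq_square t')
    ultimately have "int (4 * card {x. \<Theta> x = c}) = 16 * int t^2 - 4 * int t" by (simp add: of_nat_diff)
    then show ?thesis using True by simp
  next
    case False
    then have e: "\<epsilon> = -1" using eps by simp
    then have "witt_index \<Theta> = k" using wtype k by simp
    then have cW': "card W = t" using cW t' by simp
    then have cP: "card ?P = 16 * t" using WP t' by (simp add: power2_eq_square)
    have zero: "{x\<in>?P. \<Theta> x = 0} = W"
    proof
      show "{x\<in>?P. \<Theta> x = 0} \<subseteq> W"
      proof -
        have mx': "\<And>W'. vec.subspace W' \<Longrightarrow> \<forall>x\<in>W'. \<Theta> x = 0 \<Longrightarrow> vec.dim W' \<le> vec.dim W"
          using mx W(3) by simp
        show ?thesis using maximal_ext[OF W(1,2) mx'] by blast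
      qed
      show "W \<subseteq> {x\<in>?P. \<Theta> x = 0}" using WsP W(2) by auto
    qed
    define K where "K = card {x\<in>?P. \<Theta> x = c}"
    have clP: "\<And>x s. x \<in> ?P \<Longrightarrow> s *s x \<in> ?P" using perp_subspace vec.subspace_scale by blast
    have Keq: "card {x\<in>?P. \<Theta> x = e} = K" if "e \<noteq> 0" for e
      unfolding K_def by (rule scale_eq[OF clP that c])
    have "card ?P = (\<Sum>e\<in>UNIV. card {x\<in>?P. \<Theta> x = e})" by (rule card_fibers) simp
    also have "\<dots> = card {x\<in>?P. \<Theta> x = 0} + (\<Sum>e\<in>UNIV-{0}. card {x\<in>?P. \<Theta> x = e})"
      by (simp add: sum.remove)
    also have "(\<Sum>e\<in>UNIV-{0}. card {x\<in>?P. \<Theta> x = e}) = (\<Sum>e\<in>UNIV-{0::'a}. K)"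
      by (rule sum.cong) (auto simp: Keq)
    also have "\<dots> = 3 * K" using cardF by (simp add: card_Diff_singleton)
    finally have "16 * t = t + 3 * K" using zero cW' cP by simp
    then have K5: "K = 5 * t" by simp
    have "4 * card {x. \<Theta> x = c} = 16 * t^2 - 16 * t + 20 * t" using spl out cP K5 K_def by simp
    moreover have "16 * t \<le> 16 * t^2" by (simp add: power2_eq_square t')
    ultimately have "int (4 * card {x. \<Theta> x = c}) = 16 * int t^2 + 4 * int t" by (simp add: of_nat_diff)
    then show ?thesis using e by simp
  qed
qed

end


context F4Q begin

lemma tr4_zero: "tr4 (y::'a) = 0 \<longleftrightarrow> y = 0 \<or> y = 1"
proof -
  have "tr4 y = y * (y + 1)" unfolding tr4_def by (simp add: power2_eq_square algebra_simps)
  moreover have "y + 1 = 0 \<longleftrightarrow> y = 1" by (metis add_self add_left_cancel)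
  ultimately show ?thesis by auto
qed

lemma degree:
  fixes c :: 'a and t :: nat and \<epsilon> :: int
  assumes cr: "c^2 + c + 1 = 0" and a: "\<Theta> a = c"
    and N: "CARD('a^'n) = 16 * t^2"
    and Nc: "\<And>e. e \<noteq> 0 \<Longrightarrow> int (card {x. \<Theta> x = e}) = 4 * int t^2 - \<epsilon> * int t"
  shows "int (card {b. \<Theta> b = c \<and> b \<noteq> a \<and> tr4 (f a b) = 0}) = 2 * int t^2 - \<epsilon> * int t - 1"
proof -
  note u4 = univ4[OF cr]
  define M where "M e d = card {b. \<Theta> b = e \<and> f a b = d}" for e d
  have a0: "a \<noteq> 0" using a u4(2) by auto
  obtain u where u: "f a u = 1" using exists_unit[OF a0] f_sym by metis
  have fib: "card (UNIV::('a^'n) set) = 4 * card {b. f a b = d}" for d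
  proof -
    have "card (UNIV::('a^'n) set) = 4 * card {x\<in>UNIV. f a x = d}"
      by (rule fiber_shift[where u=u]) (auto simp: f_add2 f_scale2 u)
    then show ?thesis by simp
  qed
  have M0: "M e 0 = M 0 0" for e
  proof -
    obtain s where s: "s^2 = e / c" using sq_surj by blast
    have sc: "s^2 * c = e" using s u4(2) a by simp
    have Th: "\<Theta> (b + s *s a) = \<Theta> b + e" if "f a b = 0" for b
      using that sc a by (simp add: Theta_add scale f_scale2 f_sym[of b])
    have fa: "f a (b + s *s a) = f a b" for b by (simp add: f_add2 f_scale2)
    have "bij_betw (\<lambda>b. b + s *s a) {b. \<Theta> b = 0 \<and> f a b = 0} {b. \<Theta> b = e \<and> f a b = 0}"
    proof (rule bij_betw_byWitness[where f'="\<lambda>b. b + s *s a"])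
      show "\<forall>x\<in>{b. \<Theta> b = 0 \<and> f a b = 0}. x + s *s a + s *s a = x" by (simp only: vaddc2) simp
      show "\<forall>x\<in>{b. \<Theta> b = e \<and> f a b = 0}. x + s *s a + s *s a = x" by (simp only: vaddc2) simp
      have i1: "\<Theta> (b + s *s a) = e \<and> f a (b + s *s a) = 0" if h: "\<Theta> b = 0" "f a b = 0" for b
        using Th[OF h(2)] fa[of b] h by simp
      have i2: "\<Theta> (b + s *s a) = 0 \<and> f a (b + s *s a) = 0" if h: "\<Theta> b = e" "f a b = 0" for b
        using Th[OF h(2)] fa[of b] h by simp
      show "(\<lambda>b. b + s *s a) ` {b. \<Theta> b = 0 \<and> f a b = 0} \<subseteq> {b. \<Theta> b = e \<and> f a b = 0}"
        using i1 by blast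
      show "(\<lambda>b. b + s *s a) ` {b. \<Theta> b = e \<and> f a b = 0} \<subseteq> {b. \<Theta> b = 0 \<and> f a b = 0}"
        using i2 by blast
    qed
    from bij_betw_same_card[OF this] show ?thesis unfolding M_def by simp
  qed
  have M00: "4 * M 0 0 = card {b. f a b = 0}"
  proof -
    have "card {b. f a b = 0} = (\<Sum>e\<in>UNIV. card {x\<in>{b. f a b = 0}. \<Theta> x = e})"
      by (rule card_fibers) simp
    also have "\<dots> = (\<Sum>e\<in>(UNIV::'a set). M 0 0)"
    proof (rule sum.cong)
      fix e :: 'a
      have M0': "card {b. \<Theta> b = e \<and> f a b = 0} = M 0 0" using M0[of e] unfolding M_def .
      show "card {x\<in>{b. f a b = 0}. \<Theta> x = e} = M 0 0" using M0' by (simp add: conj_commute)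
    qed simp
    finally show ?thesis using cardF by simp
  qed
  have M00t: "M 0 0 = t^2" using M00 fib[of 0] N by simp
  have M0d: "M 0 d = M 0 1" if d: "d \<noteq> 0" for d
  proof -
    have "bij_betw (\<lambda>b. d *s b) {b. \<Theta> b = 0 \<and> f a b = 1} {b. \<Theta> b = 0 \<and> f a b = d}"
    proof (rule bij_betw_byWitness[where f'="\<lambda>b. (1/d) *s b"])
      show "\<forall>x\<in>{b. \<Theta> b = 0 \<and> f a b = 1}. (1/d) *s (d *s x) = x" using d by (simp add: vector_smult_assoc)
      show "\<forall>x\<in>{b. \<Theta> b = 0 \<and> f a b = d}. d *s ((1/d) *s x) = x" using d by (simp add: vector_smult_assoc)
      show "(*s) d ` {b. \<Theta> b = 0 \<and> f a b = 1} \<subseteq> {b. \<Theta> b = 0 \<and> f a b = d}"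
        by (auto simp: scale f_scale2)
      show "(\<lambda>b. (1/d) *s b) ` {b. \<Theta> b = 0 \<and> f a b = d} \<subseteq> {b. \<Theta> b = 0 \<and> f a b = 1}"
        using d by (auto simp: scale f_scale2)
    qed
    from bij_betw_same_card[OF this] show ?thesis unfolding M_def by simp
  qed
  have N0a: "card {x. \<Theta> x = 0} = M 0 0 + 3 * M 0 1"
  proof -
    have "card {x. \<Theta> x = 0} = (\<Sum>d\<in>UNIV. card {x\<in>{x. \<Theta> x = 0}. f a x = d})"
      by (rule card_fibers) simp
    also have "\<dots> = (\<Sum>d\<in>UNIV. M 0 d)" by (rule sum.cong) (auto simp: M_def)
    also have "\<dots> = M 0 0 + (\<Sum>d\<in>UNIV-{0}. M 0 d)" by (simp add: sum.remove)
    also have "(\<Sum>d\<in>UNIV-{0}. M 0 d) = (\<Sum>d\<in>UNIV-{0::'a}. M 0 1)" by (intro sum.cong refl M0d) simp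
    also have "\<dots> = 3 * M 0 1" using cardF by (simp add: card_Diff_singleton)
    finally show ?thesis .
  qed
  have N0b: "int (card {x. \<Theta> x = 0}) = 16 * int t^2 - 3 * (4 * int t^2 - \<epsilon> * int t)"
  proof -
    have "card (UNIV::('a^'n) set) = (\<Sum>e\<in>UNIV. card {x\<in>UNIV. \<Theta> x = e})"
      by (rule card_fibers) simp
    also have "\<dots> = card {x. \<Theta> x = 0} + (\<Sum>e\<in>UNIV-{0}. card {x. \<Theta> x = e})" by (simp add: sum.remove)
    finally have "int (card (UNIV::('a^'n) set)) = int (card {x. \<Theta> x = 0}) + (\<Sum>e\<in>UNIV-{0}. int (card {x. \<Theta> x = e}))"
      by simp
    also have "(\<Sum>e\<in>UNIV-{0}. int (card {x. \<Theta> x = e})) = (\<Sum>e\<in>UNIV-{0::'a}. 4 * int t^2 - \<epsilon> * int t)"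
      by (rule sum.cong) (auto simp: Nc)
    also have "\<dots> = 3 * (4 * int t^2 - \<epsilon> * int t)" using cardF by (simp add: card_Diff_singleton)
    finally have X: "int (card (UNIV::('a^'n) set)) = int (card {x. \<Theta> x = 0}) + 3 * (4 * int t^2 - \<epsilon> * int t)" .
    have Ni: "int (card (UNIV::('a^'n) set)) = 16 * int t^2" using N by (simp only: of_nat_mult of_nat_power of_nat_numeral)
    show ?thesis using X Ni by linarith
  qed
  have M1: "M e 1 = M (e + c + 1) 1" for e
  proof -
    have Th: "\<Theta> (b + a) = \<Theta> b + c + 1" if "f a b = 1" for b
      using that a by (simp add: Theta_add f_sym[of b])
    have fa: "f a (b + a) = f a b" for b by (simp add: f_add2)
    have "bij_betw (\<lambda>b. b + a) {b. \<Theta> b = e \<and> f a b = 1} {b. \<Theta> b = e + c + 1 \<and> f a b = 1}"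
    proof (rule bij_betw_byWitness[where f'="\<lambda>b. b + a"])
      show "\<forall>x\<in>{b. \<Theta> b = e \<and> f a b = 1}. x + a + a = x" by (simp only: vaddc2) simp
      show "\<forall>x\<in>{b. \<Theta> b = e + c + 1 \<and> f a b = 1}. x + a + a = x" by (simp only: vaddc2) simp
      have ee: "e + c + 1 + c + 1 = e" by (simp add: add.assoc add.left_commute[of 1 c])
      have i1: "\<Theta> (b + a) = e + c + 1 \<and> f a (b + a) = 1" if h: "\<Theta> b = e" "f a b = 1" for b
        using Th[OF h(2)] fa[of b] h by simp
      have i2: "\<Theta> (b + a) = e \<and> f a (b + a) = 1" if h: "\<Theta> b = e + c + 1" "f a b = 1" for b
      proof -
        have "\<Theta> (b + a) = e + c + 1 + c + 1" using Th[OF h(2)] h by simp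
        then show ?thesis using ee fa[of b] h by simp
      qed
      show "(\<lambda>b. b + a) ` {b. \<Theta> b = e \<and> f a b = 1} \<subseteq> {b. \<Theta> b = e + c + 1 \<and> f a b = 1}"
        using i1 by blast
      show "(\<lambda>b. b + a) ` {b. \<Theta> b = e + c + 1 \<and> f a b = 1} \<subseteq> {b. \<Theta> b = e \<and> f a b = 1}"
        using i2 by blast
    qed
    from bij_betw_same_card[OF this] show ?thesis unfolding M_def by simp
  qed
  have Mc1: "M c 1 = M 1 1" using M1[of c] by (simp add: add.assoc)
  have M01: "M 0 1 = M (c + 1) 1" using M1[of 0] by simp
  have S1: "4 * (M 0 1 + M 1 1 + M c 1 + M (c + 1) 1) = 16 * t^2"
  proof -
    have "card {b. f a b = 1} = (\<Sum>e\<in>UNIV. card {x\<in>{b. f a b = 1}. \<Theta> x = e})"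
      by (rule card_fibers) simp
    also have "\<dots> = (\<Sum>e\<in>UNIV. M e 1)" by (rule sum.cong) (auto simp: M_def conj_commute)
    also have "\<dots> = M 0 1 + M 1 1 + M c 1 + M (c + 1) 1" by (rule sum4[OF cr])
    finally show ?thesis using fib[of 1] N by simp
  qed
  have setq: "{b. \<Theta> b = c \<and> b \<noteq> a \<and> tr4 (f a b) = 0} =
      ({b. \<Theta> b = c \<and> f a b = 0} \<union> {b. \<Theta> b = c \<and> f a b = 1}) - {a}"
    by (auto simp: tr4_zero)
  have "card (({b. \<Theta> b = c \<and> f a b = 0} \<union> {b. \<Theta> b = c \<and> f a b = 1}) - {a}) = M c 0 + M c 1 - 1"
  proof -
    have "card ({b. \<Theta> b = c \<and> f a b = 0} \<union> {b. \<Theta> b = c \<and> f a b = 1}) = M c 0 + M c 1"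
      unfolding M_def by (rule card_Un_disjoint) auto
    moreover have "a \<in> {b. \<Theta> b = c \<and> f a b = 0} \<union> {b. \<Theta> b = c \<and> f a b = 1}" using a by simp
    ultimately show ?thesis by (simp add: card_Diff_singleton)
  qed
  moreover have "M c 0 \<ge> 1"
  proof -
    have "a \<in> {b. \<Theta> b = c \<and> f a b = 0}" using a by simp
    then have "card {b. \<Theta> b = c \<and> f a b = 0} > 0" by (intro card_gt_0_iff[THEN iffD2]) auto
    then show ?thesis unfolding M_def by simp
  qed
  moreover have "int (M c 0) = int t^2" using M0[of c] M00t by simp
  moreover have "int (M c 1) = int t^2 - \<epsilon> * int t"
  proof -
    have "3 * int (M 0 1) = 3 * int t^2 + 3 * \<epsilon> * int t" using N0a N0b M00t
      by (simp add: algebra_simps)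
    then have "int (M 0 1) = int t^2 + \<epsilon> * int t" by simp
    moreover have "M 0 1 + M c 1 = 2 * t^2" using S1 Mc1 M01 by simp
    then have "int (M 0 1) + int (M c 1) = 2 * int t^2"
      by (metis of_nat_add of_nat_mult of_nat_power of_nat_numeral)
    ultimately show ?thesis by simp
  qed
  ultimately show ?thesis unfolding setq by (simp add: of_nat_diff)
qed

end


lemma pow0: "(2::int)^(4*k) = ((4::int)^k)^2"
proof -
  have "(2::int)^(4*k) = 2^(2*(2*k))" by simp
  also have "\<dots> = (2^2)^(2*k)" by (rule power_mult)
  also have "\<dots> = 4^(k*2)" by (simp add: mult.commute)
  also have "\<dots> = (4^k)^2" by (rule power_mult)
  finally show ?thesis .
qed
lemma pow_id1: "(2::int)^(4*k+2) = 4 * ((4::int)^k)^2"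
  by (simp add: power_add pow0)
lemma pow_id2: "(2::int)^(4*k+1) = 2 * ((4::int)^k)^2"
  by (simp add: power_add pow0)
lemma pow_id3: "(2::int)^(2*k) = (4::int)^k"
  by (simp add: power_mult)
lemma pow_id4: "(4::nat)^(2*Suc k) = 16 * (4^k)^2"
  by (induction k) (simp_all add: power2_eq_square algebra_simps)

theorem proposition4p8:
  fixes \<Theta> :: "'a::{field,finite}^'n \<Rightarrow> 'a"
    and m :: nat and \<epsilon> :: int and \<omega> :: 'a
    and X A B :: "('a^'n) set"
    and G1 G2 :: "'a^'n \<Rightarrow> 'a^'n \<Rightarrow> bool"
  assumes F4: "CARD('a) = 4"
    and dim: "CARD('n) = 2 * m"
    and m: "m \<ge> 1"
    and qf: "quadratic_form \<Theta>"
    and nd: "nondegenerate \<Theta>"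
    and eps: "\<epsilon> = 1 \<or> \<epsilon> = -1"
    and wtype: "witt_index \<Theta> = (if \<epsilon> = 1 then m else m - 1)"
    and X_def: "X = {a. tr4 (\<Theta> a) = 1}"
    and G1_def: "\<And>a b. G1 a b \<longleftrightarrow> a \<noteq> b \<and> tr4 (polar \<Theta> a b) = 0"
    and G2_def: "\<And>a b. G2 a b \<longleftrightarrow> a \<noteq> b \<and> \<Theta> (a + b) = (polar \<Theta> a b)^2"
    and lam_root: "\<omega>^2 + \<omega> + 1 = 0"
    and A_def: "A = {a. \<Theta> a = \<omega>}"
    and B_def: "B = {a. \<Theta> a = \<omega> + 1}"
  shows "X = A \<union> B
    \<and> (\<forall>a\<in>X. \<forall>b\<in>X. G2 a b \<longleftrightarrow> seidel_switch G1 A a b)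
    \<and> (\<forall>a\<in>X. \<forall>b\<in>X. G2 a b \<longleftrightarrow> seidel_switch G1 B a b)
    \<and> int (card A) = 2^(4*m-2) - \<epsilon> * 2^(2*m-2)
    \<and> int (card B) = 2^(4*m-2) - \<epsilon> * 2^(2*m-2)
    \<and> (\<forall>a\<in>A. int (card {b\<in>A. G1 a b}) = 2^(4*m-3) - \<epsilon> * 2^(2*m-2) - 1)
    \<and> (\<forall>a\<in>B. int (card {b\<in>B. G1 a b}) = 2^(4*m-3) - \<epsilon> * 2^(2*m-2) - 1)
    \<and> (\<forall>a\<in>A. int (card {b\<in>A. G2 a b}) = 2^(4*m-3) - \<epsilon> * 2^(2*m-2) - 1)
    \<and> (\<forall>a\<in>B. int (card {b\<in>B. G2 a b}) = 2^(4*m-3) - \<epsilon> * 2^(2*m-2) - 1)"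
proof -
  interpret F4Q \<Theta> by unfold_locales (rule F4 qf nd)+
  note u4 = univ4[OF lam_root]
  have sq: "c^2 = c + 1" if "c^2 + c + 1 = (0::'a)" for c
  proof -
    have "c^2 + (c + 1) = 0" using that by (simp add: add.assoc)
    then show ?thesis by (metis add_self add_left_cancel add.right_neutral)
  qed
  have cr2: "(\<omega> + 1)^2 + (\<omega> + 1) + 1 = 0"
  proof -
    have "(\<omega> + 1)^2 = \<omega>^2 + 1" by (simp add: power2_eq_square algebra_simps)
    then show ?thesis using lam_root by (simp add: ac_simps)
  qed
  have tr_root: "tr4 c = 1" if "c^2 + c + 1 = (0::'a)" for c
    using sq[OF that] unfolding tr4_def by simp
  have tr01: "tr4 p = 0 \<or> tr4 p = 1" for p :: 'a
  proof -
    have "p \<in> {0, 1, \<omega>, \<omega> + 1}" using u4(1) by blast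
    then show ?thesis using tr_root[OF lam_root] tr_root[OF cr2] by (auto simp: tr4_def)
  qed
  have tr1: "tr4 x = 1 \<longleftrightarrow> x = \<omega> \<or> x = \<omega> + 1" for x :: 'a
  proof -
    have "x = 0 \<or> x = 1 \<or> x = \<omega> \<or> x = \<omega> + 1" using u4(1) by (metis insertE empty_iff UNIV_I)
    then show ?thesis using tr_root[OF lam_root] tr_root[OF cr2] u4(6) by (auto simp: tr4_def)
  qed
  have XAB: "X = A \<union> B" unfolding X_def A_def B_def using tr1 by auto
  have AB: "A \<inter> B = {}"
  proof -
    have "\<Theta> a \<noteq> \<omega> \<or> \<Theta> a \<noteq> \<omega> + 1" for a using u4(6) by metis
    then show ?thesis unfolding A_def B_def by blast
  qed
  have G2eq: "G2 a b \<longleftrightarrow> a \<noteq> b \<and> tr4 (f a b) = \<Theta> a + \<Theta> b" for a b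
  proof -
    have c2: "(u + p = q) \<longleftrightarrow> (p + q = u)" for u p q :: 'a
    proof
      assume "u + p = q"
      then have "p + q = p + (u + p)" by simp
      also have "\<dots> = u" by (rule addc1)
      finally show "p + q = u" .
    next
      assume "p + q = u"
      then have "u + p = (p + q) + p" by simp
      also have "\<dots> = q" by (metis add.commute addc1)
      finally show "u + p = q" .
    qed
    have "\<Theta> (a + b) = (f a b)^2 \<longleftrightarrow> (\<Theta> a + \<Theta> b) + f a b = (f a b)^2"
      by (simp only: Theta_add)
    also have "\<dots> \<longleftrightarrow> f a b + (f a b)^2 = \<Theta> a + \<Theta> b" by (rule c2)
    finally have "\<Theta> (a + b) = (f a b)^2 \<longleftrightarrow> tr4 (f a b) = \<Theta> a + \<Theta> b"
      unfolding tr4_def .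
    then show ?thesis using G2_def by blast
  qed
  have sw: "G2 a b \<longleftrightarrow> seidel_switch G1 A a b" if "a \<in> X" "b \<in> X" for a b
  proof (cases "(a \<in> A) \<noteq> (b \<in> A)")
    case True
    then have "\<Theta> a + \<Theta> b = 1" using that XAB unfolding A_def B_def by auto
    then show ?thesis using True G2eq G1_def tr01[of "f a b"] unfolding seidel_switch_def by auto
  next
    case False
    then have "\<Theta> a + \<Theta> b = 0" using that XAB unfolding A_def B_def by auto
    then show ?thesis using False G2eq G1_def unfolding seidel_switch_def by auto
  qed
  have swB: "seidel_switch G1 B a b = seidel_switch G1 A a b" if "a \<in> X" "b \<in> X" for a b
  proof -
    have "((a \<in> A) \<noteq> (b \<in> A)) = ((a \<in> B) \<noteq> (b \<in> B))" using that XAB AB by auto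
    then show ?thesis unfolding seidel_switch_def by simp
  qed
  obtain k where k: "m = Suc k" using m by (cases m) auto
  define t :: nat where "t = 4^(m-1)"
  have t': "int t = 4^k" unfolding t_def k by simp
  have Nc: "int (card {x. \<Theta> x = e}) = 4 * int t^2 - \<epsilon> * int t" if "e \<noteq> 0" for e
    by (rule count_c[OF dim m eps wtype that t_def])
  have N: "CARD('a^'n) = 16 * t^2" using dim F4 k pow_id4[of k] unfolding t_def by simp
  have e1: "(2::int)^(4*m-2) = 4 * int t^2" using pow_id1[of k] k t' by simp
  have e2: "(2::int)^(2*m-2) = int t" using pow_id3[of k] k t' by simp
  have e3: "(2::int)^(4*m-3) = 2 * int t^2" using pow_id2[of k] k t' by simp
  have cA: "int (card A) = 2^(4*m-2) - \<epsilon> * 2^(2*m-2)"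
    unfolding A_def e1 e2 using Nc[OF u4(2)] by simp
  have cB: "int (card B) = 2^(4*m-2) - \<epsilon> * 2^(2*m-2)"
    unfolding B_def e1 e2 using Nc[OF u4(4)] by simp
  have dA: "int (card {b\<in>A. G1 a b}) = 2^(4*m-3) - \<epsilon> * 2^(2*m-2) - 1" if "a \<in> A" for a
  proof -
    have "{b\<in>A. G1 a b} = {b. \<Theta> b = \<omega> \<and> b \<noteq> a \<and> tr4 (f a b) = 0}"
      unfolding A_def using G1_def by auto
    then show ?thesis unfolding e3 e2 using degree[OF lam_root _ N Nc, of a] that A_def by auto
  qed
  have dB: "int (card {b\<in>B. G1 a b}) = 2^(4*m-3) - \<epsilon> * 2^(2*m-2) - 1" if "a \<in> B" for a
  proof -
    have "{b\<in>B. G1 a b} = {b. \<Theta> b = \<omega> + 1 \<and> b \<noteq> a \<and> tr4 (f a b) = 0}"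
      unfolding B_def using G1_def by auto
    then show ?thesis unfolding e3 e2 using degree[OF cr2 _ N Nc, of a] that B_def by auto
  qed
  have XA: "A \<subseteq> X" "B \<subseteq> X" using XAB by auto
  have GA: "{b\<in>A. G2 a b} = {b\<in>A. G1 a b}" if a: "a \<in> A" for a
  proof -
    have "G2 a b \<longleftrightarrow> G1 a b" if b: "b \<in> A" for b
    proof -
      have "G2 a b \<longleftrightarrow> seidel_switch G1 A a b" using sw XA a b by blast
      then show ?thesis using a b unfolding seidel_switch_def by simp
    qed
    then show ?thesis by blast
  qed
  have GB: "{b\<in>B. G2 a b} = {b\<in>B. G1 a b}" if a: "a \<in> B" for a
  proof -
    have "G2 a b \<longleftrightarrow> G1 a b" if b: "b \<in> B" for b
    proof -
      have "G2 a b \<longleftrightarrow> seidel_switch G1 B a b" using sw swB XA a b by blast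
      then show ?thesis using a b unfolding seidel_switch_def by simp
    qed
    then show ?thesis by blast
  qed
  show ?thesis using XAB sw swB cA cB dA dB GA GB by auto
qed


end
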